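(* Let $k \ge 2$ and $v$ be integers with $v \equiv 1 \pmod{k-1}$ and $v \ge k(k-1)^2 + k$. Then \[ \beta(1,v,k) = \frac{v-1}{k-1}. \]
   Context: For integers $v \ge k \ge 2$, a $(v,k)$-packing is a pair $(X,\mathcal{B})$ where $X$ is a set of $v$ points and $\mathcal{B}$ is a set of $k$-subsets of $X$ (blocks) such that every pair of distinct points lies in at most one block. A partial parallel class (PPC) is a set of pairwise disjoint blocks; its size is the number of blocks. A PPC of size $\rho$ is maximum if the packing has no PPC of size $\rho+1$. $\beta(\rho,v,k)$ denotes the maximum number of blocks in a $(v,k)$-packing in which the maximum PPC has size $\rho$; thus $\beta(1,v,k)$ is the maximum number of blocks in a $(v,k)$-packing with no two disjoint blocks. *)

theory Defs
  imports Complex_Main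
begin

text \<open>A (v,k)-packing on the point set X (points modelled as naturals; the
notion is invariant under relabelling of points).\<close>
definition packing :: "nat \<Rightarrow> nat \<Rightarrow> nat set \<Rightarrow> nat set set \<Rightarrow> bool" where
  "packing v k X \<B> \<longleftrightarrow>
     finite X \<and> card X = v \<and>
     (\<forall>B\<in>\<B>. B \<subseteq> X \<and> card B = k) \<and>
     (\<forall>x\<in>X. \<forall>y\<in>X. x \<noteq> y \<longrightarrow> card {B\<in>\<B>. x \<in> B \<and> y \<in> B} \<le> 1)"

definition PPC :: "nat set set \<Rightarrow> nat set set \<Rightarrow> bool" where
  "PPC \<B> P \<longleftrightarrow> P \<subseteq> \<B> \<and> (\<forall>B\<in>P. \<forall>C\<in>P. B \<noteq> C \<longrightarrow> B \<inter> C = {})"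

definition max_PPC_size :: "nat set set \<Rightarrow> nat \<Rightarrow> bool" where
  "max_PPC_size \<B> \<rho> \<longleftrightarrow>
     (\<exists>P. PPC \<B> P \<and> card P = \<rho>) \<and> \<not> (\<exists>P. PPC \<B> P \<and> card P = \<rho> + 1)"

definition beta :: "nat \<Rightarrow> nat \<Rightarrow> nat \<Rightarrow> nat" where
  "beta \<rho> v k = Max {card \<B> | X \<B>. packing v k X \<B> \<and> max_PPC_size \<B> \<rho>}"

end

theory Submission
  imports Defs
begin

lemma pk_fin:
  assumes "packing v k X \<B>" shows "finite \<B>"
proof -
  have "\<B> \<subseteq> Pow X" using assms unfolding packing_def by auto
  moreover have "finite X" using assms unfolding packing_def by auto
  ultimately show ?thesis using finite_subset by blast
qed

lemma pk_lin:
  assumes p: "packing v k X \<B>" and "B \<in> \<B>" "C \<in> \<B>" "x \<in> B" "y \<in> B" "x \<in> C" "y \<in> C" "x \<noteq> y"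
  shows "B = C"
proof (rule ccontr)
  assume ne: "B \<noteq> C"
  have xX: "x \<in> X" "y \<in> X" using p assms(2,4,5) unfolding packing_def by auto
  have "\<forall>x\<in>X. \<forall>y\<in>X. x \<noteq> y \<longrightarrow> card {D\<in>\<B>. x \<in> D \<and> y \<in> D} \<le> 1"
    using p unfolding packing_def by blast
  then have le: "card {D\<in>\<B>. x \<in> D \<and> y \<in> D} \<le> 1" using xX assms(8) by blast
  have fin: "finite {D\<in>\<B>. x \<in> D \<and> y \<in> D}" using pk_fin[OF p] by auto
  have "{B, C} \<subseteq> {D\<in>\<B>. x \<in> D \<and> y \<in> D}" using assms by auto
  then have "card {B, C} \<le> card {D\<in>\<B>. x \<in> D \<and> y \<in> D}" by (rule card_mono[OF fin])
  then have "card {B, C} \<le> 1" using le by linarith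
  then show False using ne by simp
qed

lemma ppc_int:
  assumes "max_PPC_size \<B> 1" "B \<in> \<B>" "C \<in> \<B>" "B \<noteq> C"
  shows "B \<inter> C \<noteq> {}"
proof
  assume "B \<inter> C = {}"
  then have "PPC \<B> {B, C}" using assms unfolding PPC_def by auto
  moreover have "card {B, C} = 1 + 1" using assms by simp
  ultimately show False using assms(1) unfolding max_PPC_size_def by blast
qed

lemma ppc_ne:
  assumes "max_PPC_size \<B> 1" shows "\<B> \<noteq> {}"
proof -
  obtain P where "PPC \<B> P" "card P = 1" using assms unfolding max_PPC_size_def by auto
  then show ?thesis unfolding PPC_def by auto
qed

lemma deg_bound:
  assumes p: "packing v k X \<B>" and I: "max_PPC_size \<B> 1" and D: "D \<in> \<B>" "y \<notin> D"
  shows "card {C\<in>\<B>. y \<in> C} \<le> k"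
proof -
  define f where "f C = (SOME z. z \<in> C \<inter> D)" for C
  have fin: "finite {C\<in>\<B>. y \<in> C}" using pk_fin[OF p] by auto
  have fC: "f C \<in> C \<inter> D" if "C \<in> {C\<in>\<B>. y \<in> C}" for C
  proof -
    have "C \<noteq> D" using that D by auto
    then have "C \<inter> D \<noteq> {}" using ppc_int[OF I] that D by auto
    then show ?thesis unfolding f_def by (meson ex_in_conv someI_ex)
  qed
  have inj: "inj_on f {C\<in>\<B>. y \<in> C}"
  proof (rule inj_onI)
    fix C1 C2 assume a: "C1 \<in> {C\<in>\<B>. y \<in> C}" "C2 \<in> {C\<in>\<B>. y \<in> C}" "f C1 = f C2"
    have "f C1 \<noteq> y" using fC[OF a(1)] D by auto
    then show "C1 = C2" using pk_lin[OF p, of C1 C2 y "f C1"] a fC[OF a(1)] fC[OF a(2)] by auto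
  qed
  have "f ` {C\<in>\<B>. y \<in> C} \<subseteq> D" using fC by auto
  moreover have "finite D" "card D = k" using p D unfolding packing_def by (auto intro: finite_subset)
  ultimately show ?thesis using card_inj_on_le[OF inj] by auto
qed

lemma upper:
  assumes p: "packing v k X \<B>" and I: "max_PPC_size \<B> 1" and k: "k \<ge> 2"
    and v: "v \<ge> k * (k - 1)^2 + k"
  shows "card \<B> * (k - 1) \<le> v - 1"
proof (cases "\<exists>x. \<forall>B\<in>\<B>. x \<in> B")
  case True
  then obtain x where x: "\<forall>B\<in>\<B>. x \<in> B" by auto
  have fin: "finite \<B>" using pk_fin[OF p] .
  have finX: "finite X" "card X = v" using p unfolding packing_def by auto
  obtain B0 where "B0 \<in> \<B>" using ppc_ne[OF I] by auto
  then have xX: "x \<in> X" using x p unfolding packing_def by auto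
  have disj: "\<forall>i\<in>\<B>. \<forall>j\<in>\<B>. i \<noteq> j \<longrightarrow> (i - {x}) \<inter> (j - {x}) = {}"
    using pk_lin[OF p] x by blast
  have "card (\<Union>B\<in>\<B>. B - {x}) = (\<Sum>B\<in>\<B>. card (B - {x}))"
    by (rule card_UN_disjoint[OF fin _ disj]) (use finX p in \<open>auto simp: packing_def intro: finite_subset\<close>)
  also have "\<dots> = (\<Sum>B\<in>\<B>. k - 1)"
    using p x unfolding packing_def by (intro sum.cong) (auto simp: card_Diff_singleton)
  also have "\<dots> = card \<B> * (k - 1)" by simp
  finally have e: "card (\<Union>B\<in>\<B>. B - {x}) = card \<B> * (k - 1)" .
  have "(\<Union>B\<in>\<B>. B - {x}) \<subseteq> X - {x}" using p unfolding packing_def by auto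
  then have "card (\<Union>B\<in>\<B>. B - {x}) \<le> card (X - {x})" using finX by (intro card_mono) auto
  then show ?thesis using e finX xX by (simp add: card_Diff_singleton)
next
  case False
  have fin: "finite \<B>" using pk_fin[OF p] .
  obtain B0 where B0: "B0 \<in> \<B>" using ppc_ne[OF I] by auto
  have deg: "card {C\<in>\<B>. y \<in> C} \<le> k" for y
  proof -
    obtain D where "D \<in> \<B>" "y \<notin> D" using False by auto
    then show ?thesis using deg_bound[OF p I] by auto
  qed
  have sub: "\<B> - {B0} \<subseteq> (\<Union>y\<in>B0. {C\<in>\<B>. y \<in> C} - {B0})"
    using ppc_int[OF I _ B0] by blast
  have finB0: "finite B0" "card B0 = k" using p B0 unfolding packing_def by (auto intro: finite_subset)
  have "card (\<B> - {B0}) \<le> card (\<Union>y\<in>B0. {C\<in>\<B>. y \<in> C} - {B0})"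
    using sub fin finB0 by (intro card_mono) auto
  also have "\<dots> \<le> (\<Sum>y\<in>B0. card ({C\<in>\<B>. y \<in> C} - {B0}))"
    by (rule card_UN_le[OF finB0(1)])
  also have "\<dots> \<le> (\<Sum>y\<in>B0. k - 1)"
  proof (rule sum_mono)
    fix y assume "y \<in> B0"
    then have "card ({C\<in>\<B>. y \<in> C} - {B0}) = card {C\<in>\<B>. y \<in> C} - 1"
      using B0 fin by (subst card_Diff_singleton) auto
    then show "card ({C\<in>\<B>. y \<in> C} - {B0}) \<le> k - 1" using deg[of y] by simp
  qed
  also have "\<dots> = k * (k - 1)" using finB0 by simp
  finally have "card \<B> \<le> k * (k - 1) + 1" using B0 fin by (simp add: card_Diff_singleton)
  then have "card \<B> * (k - 1) \<le> (k * (k - 1) + 1) * (k - 1)" by (rule mult_right_mono) simp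
  also have "\<dots> = k * (k - 1)^2 + k - 1"
  proof -
    obtain j where j: "k = Suc j" using k by (cases k) auto
    show ?thesis unfolding j by (simp add: power2_eq_square algebra_simps)
  qed
  finally show ?thesis using v by simp
qed

lemma interval_eq:
  fixes d i j w :: nat
  assumes "i * d \<le> w" "w < (i + 1) * d" "j * d \<le> w" "w < (j + 1) * d"
  shows "i = j"
proof (rule ccontr)
  assume "i \<noteq> j"
  then consider "i + 1 \<le> j" | "j + 1 \<le> i" by linarith
  then show False
  proof cases
    case 1 then have "(i + 1) * d \<le> j * d" by (rule mult_right_mono) simp
    then show False using assms by linarith
  next
    case 2 then have "(j + 1) * d \<le> i * d" by (rule mult_right_mono) simp
    then show False using assms by linarith
  qed
qed

lemma construction:
  assumes k: "k \<ge> 2" and m: "m \<ge> 1" and v: "v - 1 = m * (k - 1)" "v \<ge> 1"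
  shows "\<exists>X \<B>. packing v k X \<B> \<and> max_PPC_size \<B> 1 \<and> card \<B> = m"
proof -
  define d where "d = k - 1"
  have d: "d \<ge> 1" "k = d + 1" using k unfolding d_def by auto
  define f where "f i = insert (0::nat) {1 + i * d ..< 1 + (i + 1) * d}" for i
  define \<B> where "\<B> = f ` {..<m}"
  have memf: "z \<in> f i \<Longrightarrow> z \<noteq> 0 \<Longrightarrow> i * d \<le> z - 1 \<and> z - 1 < (i + 1) * d" for z i
    unfolding f_def by auto
  have same: "i = j" if "z \<in> f i" "z \<in> f j" "z \<noteq> 0" for z i j
    using memf[OF that(1,3)] memf[OF that(2,3)] by (intro interval_eq[of i d "z - 1" j]) auto
  have inj: "inj_on f {..<m}"
  proof (rule inj_onI)
    fix i j assume "i \<in> {..<m}" "j \<in> {..<m}" "f i = f j"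
    have "1 + i * d \<in> f i" using d unfolding f_def by auto
    then show "i = j" using same[of "1 + i*d" i j] \<open>f i = f j\<close> by auto
  qed
  have cardB: "card \<B> = m" unfolding \<B>_def using card_image[OF inj] by simp
  have pk: "packing v k {..<v} \<B>"
    unfolding packing_def
  proof (intro conjI ballI impI)
    show "finite {..<v}" by simp
    show "card {..<v} = v" by simp
  next
    fix B assume "B \<in> \<B>"
    then obtain i where i: "i < m" "B = f i" unfolding \<B>_def by auto
    have "(i + 1) * d \<le> m * d" using i by (intro mult_right_mono) auto
    then show "B \<subseteq> {..<v}" using i v d unfolding f_def d_def by auto
    have "0 \<notin> {1 + i * d ..< 1 + (i + 1) * d}" by simp
    then show "card B = k" using i d unfolding f_def by simp
  next
    fix x y assume "x \<in> {..<v}" "y \<in> {..<v}" "x \<noteq> y"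
    have fin: "finite {B \<in> \<B>. x \<in> B \<and> y \<in> B}" unfolding \<B>_def by simp
    have all: "\<forall>a\<in>{B \<in> \<B>. x \<in> B \<and> y \<in> B}. \<forall>b\<in>{B \<in> \<B>. x \<in> B \<and> y \<in> B}. a = b"
    proof (intro ballI)
      fix a b assume a: "a \<in> {B \<in> \<B>. x \<in> B \<and> y \<in> B}" and b: "b \<in> {B \<in> \<B>. x \<in> B \<and> y \<in> B}"
      obtain i j where "a = f i" "b = f j" using a b unfolding \<B>_def by auto
      moreover have "x \<noteq> 0 \<or> y \<noteq> 0" using \<open>x \<noteq> y\<close> by auto
      ultimately have "i = j" using same[of x i j] same[of y i j] a b by auto
      then show "a = b" using \<open>a = f i\<close> \<open>b = f j\<close> by simp
    qed
    show "card {B \<in> \<B>. x \<in> B \<and> y \<in> B} \<le> 1"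
      using card_le_Suc0_iff_eq[OF fin] all by simp
  qed
  have mx: "max_PPC_size \<B> 1"
    unfolding max_PPC_size_def
  proof (intro conjI)
    have "f 0 \<in> \<B>" using m unfolding \<B>_def by auto
    then show "\<exists>P. PPC \<B> P \<and> card P = 1" unfolding PPC_def
      by (intro exI[of _ "{f 0}"]) auto
    show "\<not> (\<exists>P. PPC \<B> P \<and> card P = 1 + 1)"
    proof
      assume "\<exists>P. PPC \<B> P \<and> card P = 1 + 1"
      then obtain P where P: "PPC \<B> P" "card P = 2" by auto
      then obtain a b where ab: "P = {a, b}" "a \<noteq> b" by (meson card_2_iff)
      then have "a \<in> \<B>" "b \<in> \<B>" "a \<inter> b = {}" using P unfolding PPC_def by auto
      moreover have "\<forall>B\<in>\<B>. 0 \<in> B" unfolding \<B>_def f_def by auto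
      ultimately show False by auto
    qed
  qed
  show ?thesis using pk mx cardB by blast
qed

theorem theorem5p5:
  fixes k v :: nat
  assumes "k \<ge> 2"
    and "v mod (k - 1) = 1 mod (k - 1)"
    and "v \<ge> k * (k - 1)^2 + k"
  shows "real (beta 1 v k) = (real v - 1) / (real k - 1)"
proof -
  have v1: "v \<ge> 1" using assms(1,3) by linarith
  have "(k - 1) dvd (v - 1)" using iffD1[OF mod_eq_dvd_iff_nat[OF v1] assms(2)] .
  then obtain m where m: "v - 1 = m * (k - 1)" by (metis dvd_def mult.commute)
  have "v - 1 \<ge> k - 1" using assms(1,3) by simp
  then have m1: "m \<ge> 1" using m assms(1) by (cases m) auto
  define S where "S = {card \<B> | X \<B>. packing v k X \<B> \<and> max_PPC_size \<B> 1}"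
  have mS: "m \<in> S" using construction[OF assms(1) m1 m v1] unfolding S_def by blast
  have le: "s \<le> m" if sS: "s \<in> S" for s
  proof -
    obtain X \<B> where "s = card \<B>" "packing v k X \<B>" "max_PPC_size \<B> 1" using sS unfolding S_def by blast
    then have "s * (k - 1) \<le> m * (k - 1)" using upper[OF _ _ assms(1) assms(3)] m by metis
    then show ?thesis using assms(1) by simp
  qed
  have "finite S" using le by (meson finite_atMost atMost_iff finite_subset subsetI)
  then have "beta 1 v k = m" unfolding beta_def S_def[symmetric] using mS le by (intro Max_eqI) auto
  moreover have "real v - 1 = real m * (real k - 1)" using m v1 assms(1)
  proof -
    have "real (v - 1) = real (m * (k - 1))" using m by simp
    then show ?thesis using v1 assms(1) by (simp add: of_nat_diff)
  qed
  moreover have "real k - 1 > 0" using assms(1) by simp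
  ultimately show ?thesis by simp
qed

end
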